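(* Let $w\in\mathcal S_n$ and $a,b\in\mathrm R(w)$. Then $a$ and $b$ lie in the same commutation class if and only if $\Gamma(a,(x,y,z))=\Gamma(b,(x,y,z))$ for every triple $(x,y,z)\in\mathrm T_w$.
   Context: Permutations are in one-line notation. A word $a=a_1\cdots a_\ell$ with letters in $\{1,\dots,n-1\}$ acts on a word of length $n$ by successively swapping the entries in positions $a_j$ and $a_j+1$, $j=1,\dots,\ell$. $\mathrm R(w)$ is the set of reduced words of $w$ (words of length $\ell(w)$, the number of inversions of $w$, whose action on $12\cdots n$ yields $w$). For $a\in\mathrm R(w)$, each inversion $(p,q)$ of $w$ (values $p>q$ with $p$ left of $q$ in $w$) is created by exactly one step, and $P_a(p,q)$ denotes the index of that step. Two reduced words differ by a commutation if one is obtained from the other by replacing a factor $ij$ with $|i-j|\ge2$ by $ji$; the commutation class $[a]$ is the set of reduced words reachable from $a$ by sequences of commutations. $\mathrm T_w$ is the set of triples of values $(x,y,z)$ with $x<y<z$ such that $z,y,x$ appear in this order from left to right in $w$. For $a\in\mathrm R(w)$ and $(x,y,z)\in\mathrm T_w$, $\Gamma(a,(x,y,z))=1$ if $P_a(y,x)>P_a(z,y)$ and $\Gamma(a,(x,y,z))=0$ if $P_a(y,x)<P_a(z,y)$. *)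

theory Defs
  imports Main
begin

text \<open>Permutations in one-line notation are lists; positions are 1-indexed as in the paper.\<close>

definition is_perm :: "nat \<Rightarrow> nat list \<Rightarrow> bool" where
  "is_perm n w \<longleftrightarrow> length w = n \<and> distinct w \<and> set w = {1..n}"

definition id_perm :: "nat \<Rightarrow> nat list" where
  "id_perm n = [1..<n+1]"

definition swap_pos :: "nat list \<Rightarrow> nat \<Rightarrow> nat list" where
  "swap_pos u i = u[i - 1 := u ! i, i := u ! (i - 1)]"

definition act :: "nat list \<Rightarrow> nat list \<Rightarrow> nat list" where
  "act u a = foldl swap_pos u a"

definition inv_count :: "nat list \<Rightarrow> nat" where
  "inv_count w = card {(i, j). i < j \<and> j < length w \<and> w ! i > w ! j}"

definition red_words :: "nat \<Rightarrow> nat list \<Rightarrow> nat list set" where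
  "red_words n w = {a. set a \<subseteq> {1..n - 1} \<and> length a = inv_count w
                        \<and> act (id_perm n) a = w}"

text \<open>Step j (1-indexed) of word a acting on 12...n creates inversion (p,q), p > q:
  the values q (left) and p (right) get swapped, putting p to the left of q.\<close>
definition creates :: "nat \<Rightarrow> nat list \<Rightarrow> nat \<Rightarrow> nat \<Rightarrow> nat \<Rightarrow> bool" where
  "creates n a j p q \<longleftrightarrow>
     (let u = act (id_perm n) (take (j - 1) a); i = a ! (j - 1)
      in u ! (i - 1) = q \<and> u ! i = p \<and> q < p)"

definition P :: "nat \<Rightarrow> nat list \<Rightarrow> nat \<Rightarrow> nat \<Rightarrow> nat" where
  "P n a p q = (THE j. 1 \<le> j \<and> j \<le> length a \<and> creates n a j p q)"

definition comm_step :: "nat list \<Rightarrow> nat list \<Rightarrow> bool" where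
  "comm_step a b \<longleftrightarrow> (\<exists>u v i j. (i + 2 \<le> j \<or> j + 2 \<le> i) \<and>
       a = u @ [i, j] @ v \<and> b = u @ [j, i] @ v)"

definition comm_class :: "nat list \<Rightarrow> nat list set" where
  "comm_class a = {b. comm_step\<^sup>*\<^sup>* a b}"

definition T :: "nat list \<Rightarrow> (nat \<times> nat \<times> nat) set" where
  "T w = {(x, y, z). x < y \<and> y < z \<and>
     (\<exists>i j k. i < j \<and> j < k \<and> k < length w \<and> w ! i = z \<and> w ! j = y \<and> w ! k = x)}"

definition Gamma :: "nat \<Rightarrow> nat list \<Rightarrow> nat \<times> nat \<times> nat \<Rightarrow> nat" where
  "Gamma n a t = (case t of (x, y, z) \<Rightarrow> if P n a y x > P n a z y then 1 else 0)"

end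

theory Submission
  imports Defs
begin


lemma length_swap[simp]: "length (swap_pos u i) = length u"
  by (simp add: swap_pos_def)

lemma nth_swap:
  assumes "1 \<le> i" "i < length u" "k < length u"
  shows "swap_pos u i ! k = (if k = i - 1 then u ! i else if k = i then u ! (i - 1) else u ! k)"
  using assms by (auto simp: swap_pos_def nth_list_update)

lemma swap_swap:
  assumes "1 \<le> i" "i < length u"
  shows "swap_pos (swap_pos u i) i = u"
  using assms by (intro nth_equalityI) (auto simp: nth_swap)

lemma swap_comm:
  assumes "1 \<le> i" "i < length u" "1 \<le> j" "j < length u" "i + 2 \<le> j \<or> j + 2 \<le> i"
  shows "swap_pos (swap_pos u i) j = swap_pos (swap_pos u j) i"
proof (intro nth_equalityI)
  fix k assume k: "k < length (swap_pos (swap_pos u i) j)"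
  have ij: "i - 1 \<noteq> j - 1" "i - 1 \<noteq> j" "i \<noteq> j - 1" "i \<noteq> j" using assms by auto
  show "swap_pos (swap_pos u i) j ! k = swap_pos (swap_pos u j) i ! k"
    using k assms ij by (simp add: nth_swap)
qed simp

lemma distinct_swap:
  assumes "1 \<le> i" "i < length u" "distinct u"
  shows "distinct (swap_pos u i)"
proof -
  have "i - 1 < length u" using assms by auto
  thus ?thesis using assms unfolding swap_pos_def by (simp add: distinct_swap)
qed

lemma set_swap:
  assumes "1 \<le> i" "i < length u"
  shows "set (swap_pos u i) = set u"
proof -
  have "i - 1 < length u" using assms by auto
  thus ?thesis using assms unfolding swap_pos_def by (simp add: set_swap)
qed

lemma is_perm_swap:
  assumes "is_perm n u" "1 \<le> i" "i < n"
  shows "is_perm n (swap_pos u i)"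
  using assms distinct_swap set_swap unfolding is_perm_def by auto

lemma act_snoc: "act u (xs @ [x]) = swap_pos (act u xs) x"
  by (simp add: act_def)

lemma act_append: "act u (xs @ ys) = act (act u xs) ys"
  by (simp add: act_def)

lemma act_Nil[simp]: "act u [] = u" by (simp add: act_def)



definition before :: "nat list \<Rightarrow> nat \<Rightarrow> nat \<Rightarrow> bool" where
  "before u x y \<longleftrightarrow> (\<exists>i j. i < j \<and> j < length u \<and> u ! i = x \<and> u ! j = y)"

definition vinv :: "nat list \<Rightarrow> (nat \<times> nat) set" where
  "vinv u = {(p, q). q < p \<and> before u p q}"

lemma before_antisym:
  assumes "distinct u" "before u x y" shows "\<not> before u y x"
  using assms unfolding before_def
  by (metis distinct_conv_nth less_trans not_less_iff_gr_or_eq)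

lemma before_irrefl: "distinct u \<Longrightarrow> \<not> before u x x"
  using before_antisym by blast

lemma before_total:
  assumes "x \<in> set u" "y \<in> set u" "x \<noteq> y" shows "before u x y \<or> before u y x"
  using assms unfolding before_def in_set_conv_nth
  by (metis linorder_neqE_nat)

lemma before_set: "before u x y \<Longrightarrow> x \<in> set u \<and> y \<in> set u"
  unfolding before_def by auto

lemma before_trans:
  assumes "distinct u" "before u x y" "before u y z" shows "before u x z"
proof -
  from assms(2) obtain i j where "i < j" "j < length u" "u!i = x" "u!j = y" unfolding before_def by auto
  moreover from assms(3) obtain j' k where "j' < k" "k < length u" "u!j' = y" "u!k = z" unfolding before_def by auto
  ultimately have "j = j'" using assms(1) by (metis distinct_conv_nth less_trans)
  thus ?thesis unfolding before_def using \<open>i<j\<close> \<open>j'<k\<close> \<open>k < length u\<close> \<open>u!i = x\<close> \<open>u!k=z\<close>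
    by (intro exI[of _ i] exI[of _ k]) auto
qed

lemma before_swap:
  assumes "distinct u" "1 \<le> i" "i < length u"
  shows "before (swap_pos u i) x y \<longleftrightarrow>
    (if x = u!i \<and> y = u!(i-1) then True else if x = u!(i-1) \<and> y = u!i then False else before u x y)"
proof -
  let ?v = "swap_pos u i"
  define c where "c = u!(i-1)"
  define d where "d = u!i"
  have cd: "c \<noteq> d" using assms unfolding c_def d_def by (simp add: nth_eq_iff_index_eq)
  have dv: "distinct ?v" using assms distinct_swap by blast
  have v1: "?v!(i-1) = d" and v2: "?v ! i = c" using assms by (auto simp: nth_swap c_def d_def)
  have bdc: "before ?v d c" unfolding before_def using v1 v2 assms
    by (metis One_nat_def Suc_pred diff_less le_simps(3) length_swap zero_less_one)
  have bcd: "before u c d" unfolding before_def using assms c_def d_def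
    by (metis One_nat_def Suc_pred diff_less le_simps(3) zero_less_one)
  have main: "before ?v x y \<longleftrightarrow> before u x y" if "\<not> (x = d \<and> y = c)" "\<not> (x = c \<and> y = d)"
  proof
    assume "before ?v x y"
    then obtain k l where kl: "k < l" "l < length u" "?v!k = x" "?v!l = y" unfolding before_def by auto
    show "before u x y"
    proof (cases "k = i - 1")
      case True
      then have "l \<noteq> i" using kl v1 v2 that by auto
      then have "l > i" using True kl assms by auto
      then show ?thesis unfolding before_def using kl True assms
        by (intro exI[of _ i] exI[of _ l]) (auto simp: nth_swap)
    next
      case F1: False
      show ?thesis
      proof (cases "k = i")
        case True
        then have "l > i" using kl by auto
        then show ?thesis unfolding before_def using kl True assms
          by (intro exI[of _ "i-1"] exI[of _ l]) (auto simp: nth_swap)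
      next
        case F2: False
        show ?thesis
        proof (cases "l = i - 1")
          case True then show ?thesis unfolding before_def using kl F1 F2 assms
            by (intro exI[of _ k] exI[of _ i]) (auto simp: nth_swap)
        next
          case F3: False
          show ?thesis
          proof (cases "l = i")
            case True then show ?thesis unfolding before_def using kl F1 F2 assms
              by (intro exI[of _ k] exI[of _ "i-1"]) (auto simp: nth_swap)
          next
            case False then show ?thesis unfolding before_def using kl F1 F2 F3 assms
              by (intro exI[of _ k] exI[of _ l]) (auto simp: nth_swap)
          qed
        qed
      qed
    qed
  next
    assume "before u x y"
    then obtain k l where kl: "k < l" "l < length u" "u!k = x" "u!l = y" unfolding before_def by auto
    show "before ?v x y"
    proof (cases "k = i - 1")
      case True
      then have "l \<noteq> i" using kl that c_def d_def by auto
      then have "l > i" using True kl assms by auto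
      then show ?thesis unfolding before_def using kl True assms
        by (intro exI[of _ i] exI[of _ l]) (auto simp: nth_swap)
    next
      case F1: False
      show ?thesis
      proof (cases "k = i")
        case True
        then have "l > i" using kl by auto
        then show ?thesis unfolding before_def using kl True assms
          by (intro exI[of _ "i-1"] exI[of _ l]) (auto simp: nth_swap)
      next
        case F2: False
        show ?thesis
        proof (cases "l = i - 1")
          case True then show ?thesis unfolding before_def using kl F1 F2 assms
            by (intro exI[of _ k] exI[of _ i]) (auto simp: nth_swap)
        next
          case F3: False
          show ?thesis
          proof (cases "l = i")
            case True then show ?thesis unfolding before_def using kl F1 F2 assms
              by (intro exI[of _ k] exI[of _ "i-1"]) (auto simp: nth_swap)
          next
            case False then show ?thesis unfolding before_def using kl F1 F2 F3 assms
              by (intro exI[of _ k] exI[of _ l]) (auto simp: nth_swap)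
          qed
        qed
      qed
    qed
  qed
  show ?thesis
    using main bdc before_antisym[OF dv bdc] cd unfolding c_def[symmetric] d_def[symmetric] by auto
qed



lemma finite_vinv: "finite (vinv u)"
proof -
  have "vinv u \<subseteq> set u \<times> set u" unfolding vinv_def using before_set by auto
  thus ?thesis by (rule finite_subset) auto
qed

lemma card_vinv:
  assumes "distinct u" shows "card (vinv u) = inv_count u"
proof -
  let ?S = "{(i, j). i < j \<and> j < length u \<and> u ! i > u ! j}"
  let ?f = "\<lambda>(i,j). (u!i, u!j)"
  have "vinv u = ?f ` ?S"
    unfolding vinv_def before_def by (auto simp: image_def)
  moreover have "inj_on ?f ?S"
    using assms by (auto simp: inj_on_def nth_eq_iff_index_eq)
  ultimately show ?thesis unfolding inv_count_def by (simp add: card_image)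
qed

lemma nth_id_perm: "k < n \<Longrightarrow> id_perm n ! k = k + 1"
  by (simp add: id_perm_def del: upt_Suc)

lemma length_id_perm[simp]: "length (id_perm n) = n"
  by (simp add: id_perm_def)

lemma is_perm_id: "is_perm n (id_perm n)"
  unfolding is_perm_def id_perm_def by auto

lemma vinv_id: "vinv (id_perm n) = {}"
proof -
  have h: "p < q" if "before (id_perm n) p q" for p q
  proof -
    from that obtain i j where "i < j" "j < n" "id_perm n ! i = p" "id_perm n ! j = q"
      unfolding before_def by auto
    thus ?thesis by (simp add: nth_id_perm)
  qed
  show ?thesis unfolding vinv_def by (auto dest: h)
qed

lemma vinv_swap_char:
  assumes "distinct u" "1 \<le> i" "i < length u"
  shows "(p, q) \<in> vinv (swap_pos u i) \<longleftrightarrow>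
     ((p = u!i \<and> q = u!(i-1) \<and> u!(i-1) < u!i) \<or> (\<not> (p = u!(i-1) \<and> q = u!i) \<and> (p, q) \<in> vinv u))"
proof -
  have bs: "before (swap_pos u i) p q \<longleftrightarrow> (if p = u!i \<and> q = u!(i-1) then True else if p = u!(i-1) \<and> q = u!i then False else before u p q)"
    by (rule before_swap[OF assms(1-3)])
  have ne: "u!(i-1) \<noteq> u!i" using assms by (simp add: nth_eq_iff_index_eq)
  show ?thesis
  proof (cases "p = u!i \<and> q = u!(i-1)")
    case True
    have "before (swap_pos u i) p q" using bs True by (simp only: simp_thms if_True)
    thus ?thesis using True ne unfolding vinv_def by auto
  next
    case F: False
    show ?thesis
    proof (cases "p = u!(i-1) \<and> q = u!i")
      case True
      have "\<not> before (swap_pos u i) p q" using bs True F by (simp only: if_True if_False) simp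
      thus ?thesis using True F unfolding vinv_def by blast
    next
      case False
      have bs': "before (swap_pos u i) p q \<longleftrightarrow> before u p q" using bs F False by (simp only: if_False)
      thus ?thesis using F False unfolding vinv_def by blast
    qed
  qed
qed

lemma vinv_swap_up:
  assumes "distinct u" "1 \<le> i" "i < length u" "u!(i-1) < u!i"
  shows "vinv (swap_pos u i) = insert (u!i, u!(i-1)) (vinv u)" "(u!i, u!(i-1)) \<notin> vinv u"
proof -
  have "before u (u!(i-1)) (u!i)" unfolding before_def using assms
    by (intro exI[of _ "i-1"] exI[of _ i]) auto
  hence "\<not> before u (u!i) (u!(i-1))" using before_antisym assms by blast
  thus "(u!i, u!(i-1)) \<notin> vinv u" unfolding vinv_def by auto
  show "vinv (swap_pos u i) = insert (u!i, u!(i-1)) (vinv u)"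
  proof (rule set_eqI, clarify)
    fix p q
    show "((p, q) \<in> vinv (swap_pos u i)) = ((p, q) \<in> insert (u ! i, u ! (i - 1)) (vinv u))"
      unfolding vinv_swap_char[OF assms(1-3)] using assms(4) unfolding vinv_def by auto
  qed
qed

lemma vinv_swap_down:
  assumes "distinct u" "1 \<le> i" "i < length u" "u!(i-1) > u!i"
  shows "vinv (swap_pos u i) = vinv u - {(u!(i-1), u!i)}" "(u!(i-1), u!i) \<in> vinv u"
proof -
  have "before u (u!(i-1)) (u!i)" unfolding before_def using assms
    by (intro exI[of _ "i-1"] exI[of _ i]) auto
  thus "(u!(i-1), u!i) \<in> vinv u" unfolding vinv_def using assms by auto
  show "vinv (swap_pos u i) = vinv u - {(u!(i-1), u!i)}"
  proof (rule set_eqI, clarify)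
    fix p q
    show "((p, q) \<in> vinv (swap_pos u i)) = ((p, q) \<in> vinv u - {(u!(i-1), u!i)})"
      unfolding vinv_swap_char[OF assms(1-3)] using assms(4) by auto
  qed
qed

lemma card_vinv_swap:
  assumes "distinct u" "1 \<le> i" "i < length u"
  shows "card (vinv (swap_pos u i)) = (if u!(i-1) < u!i then Suc (card (vinv u)) else card (vinv u) - 1)"
proof -
  have ne: "u!(i-1) \<noteq> u!i" using assms by (simp add: nth_eq_iff_index_eq)
  show ?thesis
  proof (cases "u!(i-1) < u!i")
    case True thus ?thesis using vinv_swap_up[OF assms True] finite_vinv by simp
  next
    case False hence "u!(i-1) > u!i" using ne by simp
    thus ?thesis using vinv_swap_down[OF assms] finite_vinv by simp
  qed
qed



definition st :: "nat \<Rightarrow> nat list \<Rightarrow> nat \<Rightarrow> nat list" where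
  "st n a j = act (id_perm n) (take j a)"

definition cr :: "nat \<Rightarrow> nat list \<Rightarrow> nat \<Rightarrow> nat \<times> nat" where
  "cr n a j = (st n a j ! (a!j), st n a j ! (a!j - 1))"

lemma st_Suc: "j < length a \<Longrightarrow> st n a (Suc j) = swap_pos (st n a j) (a!j)"
  unfolding st_def by (simp add: take_Suc_conv_app_nth act_snoc)

lemma st_0[simp]: "st n a 0 = id_perm n" unfolding st_def by simp

lemma letter_bounds:
  fixes a :: "nat list"
  assumes "set a \<subseteq> {1..n-1}" "j < length a"
  shows "1 \<le> a!j" "a!j < n"
proof -
  have "a!j \<in> {1..n-1}" using assms nth_mem by blast
  thus "1 \<le> a!j" by simp
  have h: "1 \<le> a!j" "a!j \<le> n - 1" using \<open>a!j \<in> {1..n-1}\<close> by auto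
  show "a!j < n" using h by arith
qed

lemma st_perm:
  fixes a :: "nat list"
  assumes "set a \<subseteq> {1..n-1}"
  shows "is_perm n (st n a j)"
proof (induction j)
  case 0 thus ?case using is_perm_id by simp
next
  case (Suc j)
  show ?case
  proof (cases "j < length a")
    case True thus ?thesis using Suc st_Suc is_perm_swap letter_bounds[OF assms True] by simp
  next
    case False thus ?thesis using Suc unfolding st_def by simp
  qed
qed

context
  fixes n w a
  assumes perm: "is_perm n w" and red: "a \<in> red_words n w"
begin

lemma letters: "set a \<subseteq> {1..n-1}" using red unfolding red_words_def by auto

lemma lenw: "length w = n" "distinct w" using perm unfolding is_perm_def by auto

lemma st_m: "st n a (length a) = w" using red unfolding red_words_def st_def by simp

lemma st_dist: "distinct (st n a j)" "length (st n a j) = n"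
  using st_perm[OF letters] unfolding is_perm_def by auto

lemma lb: "j < length a \<Longrightarrow> 1 \<le> a!j" "j < length a \<Longrightarrow> a!j < n"
  using letter_bounds[OF letters] by auto

lemma card_w: "card (vinv w) = length a"
  using red card_vinv[OF lenw(2)] unfolding red_words_def by simp

lemma card_step: "j < length a \<Longrightarrow>
  card (vinv (st n a (Suc j))) = (if st n a j ! (a!j - 1) < st n a j ! (a!j) then Suc (card (vinv (st n a j))) else card (vinv (st n a j)) - 1)"
  using st_Suc card_vinv_swap st_dist lb by simp

lemma card_up: "j \<le> length a \<Longrightarrow> card (vinv (st n a j)) \<le> j"
proof (induction j)
  case 0 thus ?case using vinv_id by simp
next
  case (Suc j) thus ?case using card_step[of j]
    by (cases "st n a j ! (a!j - 1) < st n a j ! (a!j)") auto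
qed

lemma card_down: "j \<le> k \<Longrightarrow> k \<le> length a \<Longrightarrow> card (vinv (st n a k)) \<le> card (vinv (st n a j)) + (k - j)"
proof (induction k)
  case 0 thus ?case by simp
next
  case (Suc k)
  show ?case
  proof (cases "j = Suc k")
    case True thus ?thesis by simp
  next
    case False
    hence "j \<le> k" using Suc by simp
    thus ?thesis using Suc card_step[of k] by auto
  qed
qed

lemma card_st: "j \<le> length a \<Longrightarrow> card (vinv (st n a j)) = j"
proof -
  assume j: "j \<le> length a"
  have "card (vinv (st n a (length a))) \<le> card (vinv (st n a j)) + (length a - j)"
    using card_down[OF j] by simp
  hence "length a \<le> card (vinv (st n a j)) + (length a - j)" using st_m card_w by simp
  thus ?thesis using card_up[OF j] j by linarith
qed

lemma ascending: "j < length a \<Longrightarrow> st n a j ! (a!j - 1) < st n a j ! (a!j)"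
proof (rule ccontr)
  assume j: "j < length a" and na: "\<not> st n a j ! (a!j - 1) < st n a j ! (a!j)"
  have "card (vinv (st n a (Suc j))) = card (vinv (st n a j)) - 1" using card_step[OF j] na by simp
  thus False using card_st[of j] card_st[of "Suc j"] j by simp
qed

lemma cr_lt: "j < length a \<Longrightarrow> snd (cr n a j) < fst (cr n a j)"
  using ascending unfolding cr_def by simp

lemma vinv_st_Suc: "j < length a \<Longrightarrow> vinv (st n a (Suc j)) = insert (cr n a j) (vinv (st n a j))"
  "j < length a \<Longrightarrow> cr n a j \<notin> vinv (st n a j)"
proof -
  assume j: "j < length a"
  have l: "a!j < length (st n a j)" using lb(2)[OF j] st_dist(2) by simp
  note V = vinv_swap_up[OF st_dist(1) lb(1)[OF j] l ascending[OF j]]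
  show "vinv (st n a (Suc j)) = insert (cr n a j) (vinv (st n a j))"
    using V(1) st_Suc[OF j] unfolding cr_def by simp
  show "cr n a j \<notin> vinv (st n a j)" using V(2) unfolding cr_def by simp
qed

lemma vinv_st: "j \<le> length a \<Longrightarrow> vinv (st n a j) = cr n a ` {..<j}"
proof (induction j)
  case 0 thus ?case using vinv_id by simp
next
  case (Suc j) thus ?case using vinv_st_Suc(1)[of j] by (simp add: lessThan_Suc)
qed

lemma vinv_w: "vinv w = cr n a ` {..<length a}"
  using vinv_st[of "length a"] st_m by simp

lemma cr_inj: "inj_on (cr n a) {..<length a}"
proof (rule inj_onI)
  fix x y assume x: "x \<in> {..<length a}" and y: "y \<in> {..<length a}" and e: "cr n a x = cr n a y"
  show "x = y"
  proof (rule ccontr)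
    assume "x \<noteq> y"
    then consider "x < y" | "y < x" by linarith
    thus False
    proof cases
      case 1
      hence "cr n a x \<in> vinv (st n a y)" using vinv_st[of y] y by auto
      thus False using vinv_st_Suc(2)[of y] e y by auto
    next
      case 2
      hence "cr n a y \<in> vinv (st n a x)" using vinv_st[of x] x by auto
      thus False using vinv_st_Suc(2)[of x] e x by auto
    qed
  qed
qed

lemma creates_iff: "j < length a \<Longrightarrow> creates n a (Suc j) p q \<longleftrightarrow> cr n a j = (p, q)"
  using cr_lt[of j] unfolding creates_def cr_def st_def Let_def by auto

lemma P_cr: "j < length a \<Longrightarrow> cr n a j = (p, q) \<Longrightarrow> P n a p q = Suc j"
  unfolding P_def
proof (rule the_equality)
  assume "j < length a" "cr n a j = (p, q)"
  thus "1 \<le> Suc j \<and> Suc j \<le> length a \<and> creates n a (Suc j) p q" using creates_iff by auto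
next
  fix k assume j: "j < length a" "cr n a j = (p, q)" and k: "1 \<le> k \<and> k \<le> length a \<and> creates n a k p q"
  then obtain k' where k': "k = Suc k'" "k' < length a" by (cases k) auto
  hence "cr n a k' = (p, q)" using creates_iff k by auto
  hence "k' = j" using cr_inj j k' inj_on_def by (metis lessThan_iff)
  thus "k = Suc j" using k' by simp
qed

lemma P_vinv: "(p, q) \<in> vinv w \<Longrightarrow> \<exists>j < length a. cr n a j = (p, q) \<and> P n a p q = Suc j"
  using vinv_w P_cr by force

lemma P_bound: "(p, q) \<in> vinv w \<Longrightarrow> 1 \<le> P n a p q \<and> P n a p q \<le> length a"
  using P_vinv by fastforce

lemma P_inj: "(p, q) \<in> vinv w \<Longrightarrow> (p', q') \<in> vinv w \<Longrightarrow> P n a p q = P n a p' q' \<Longrightarrow> (p, q) = (p', q')"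
  using P_vinv by (metis Suc_inject)

lemma P_st: "(p, q) \<in> vinv w \<Longrightarrow> j \<le> length a \<Longrightarrow> (p, q) \<in> vinv (st n a j) \<longleftrightarrow> P n a p q \<le> j"
proof -
  assume pq: "(p, q) \<in> vinv w" and j: "j \<le> length a"
  obtain k where k: "k < length a" "cr n a k = (p, q)" "P n a p q = Suc k" using P_vinv[OF pq] by auto
  have "(p, q) \<in> vinv (st n a j) \<longleftrightarrow> (\<exists>i<j. cr n a i = cr n a k)" unfolding vinv_st[OF j] using k by (auto simp: image_iff) (metis lessThan_iff)
  also have "\<dots> \<longleftrightarrow> k < j"
    using cr_inj k j unfolding inj_on_def by (metis lessThan_iff less_le_trans)
  finally show ?thesis using k by (simp add: Suc_le_eq)
qed

lemma vinv_st_sub: "j \<le> length a \<Longrightarrow> vinv (st n a j) \<subseteq> vinv w"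
  using vinv_st vinv_w by auto

end


lemma act_Cons[simp]: "act u (x # xs) = act (swap_pos u x) xs"
  by (simp add: act_def)

lemma T_char:
  assumes "distinct w"
  shows "(x, y, z) \<in> T w \<longleftrightarrow> x < y \<and> y < z \<and> before w z y \<and> before w y x"
proof
  assume "(x, y, z) \<in> T w"
  then obtain i j k where "x < y" "y < z" "i < j" "j < k" "k < length w" "w!i = z" "w!j = y" "w!k = x"
    unfolding T_def by auto
  moreover have "before w z y" unfolding before_def using calculation
    by (intro exI[of _ i] exI[of _ j]) auto
  moreover have "before w y x" unfolding before_def using calculation
    by (intro exI[of _ j] exI[of _ k]) auto
  ultimately show "x < y \<and> y < z \<and> before w z y \<and> before w y x" by simp
next
  assume h: "x < y \<and> y < z \<and> before w z y \<and> before w y x"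
  then obtain i j where 1: "i < j" "j < length w" "w!i = z" "w!j = y" unfolding before_def by auto
  from h obtain j' k where 2: "j' < k" "k < length w" "w!j' = y" "w!k = x" unfolding before_def by auto
  have "j = j'" using assms 1 2 by (metis distinct_conv_nth less_trans)
  thus "(x, y, z) \<in> T w" unfolding T_def using 1 2 h by blast
qed

lemma T_vinv:
  assumes "distinct w" "(x, y, z) \<in> T w"
  shows "(y, x) \<in> vinv w" "(z, y) \<in> vinv w"
  using assms T_char unfolding vinv_def by auto

lemma Gamma_simp: "Gamma n a (x, y, z) = (if P n a y x > P n a z y then 1 else 0)"
  unfolding Gamma_def by simp

lemma comm_red:
  assumes perm: "is_perm n w" and red: "a \<in> red_words n w" and cs: "comm_step a b"
  shows "b \<in> red_words n w"
proof -
  obtain u v i j where ij: "i + 2 \<le> j \<or> j + 2 \<le> i" and a: "a = u @ [i, j] @ v" and b: "b = u @ [j, i] @ v"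
    using cs unfolding comm_step_def by auto
  have lt: "set a \<subseteq> {1..n-1}" using red unfolding red_words_def by auto
  have si: "1 \<le> i" "i < n" using letter_bounds[OF lt, of "length u"] a by auto
  have sj: "1 \<le> j" "j < n" using letter_bounds[OF lt, of "Suc (length u)"] a by (auto simp: nth_append)
  let ?S = "act (id_perm n) u"
  have lS: "length ?S = n" using st_perm[OF lt, of "length u"] a unfolding st_def is_perm_def by simp
  have "act (id_perm n) b = act (act ?S [j, i]) v" unfolding b by (simp add: act_append)
  also have "act ?S [j, i] = act ?S [i, j]"
    using swap_comm[of i ?S j] si sj lS ij by (simp add: act_def)
  also have "act (act ?S [i, j]) v = act (id_perm n) a" unfolding a by (simp add: act_append)
  finally show ?thesis using red a b unfolding red_words_def by auto
qed

lemma comm_Gamma: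
  assumes perm: "is_perm n w" and red: "a \<in> red_words n w" and cs: "comm_step a b"
  and t: "t \<in> T w"
  shows "Gamma n a t = Gamma n b t"
proof -
  obtain u v i j where ij: "i + 2 \<le> j \<or> j + 2 \<le> i" and a: "a = u @ [i, j] @ v" and b: "b = u @ [j, i] @ v"
    using cs unfolding comm_step_def by auto
  have redb: "b \<in> red_words n w" using comm_red[OF assms(1-3)] .
  have lt: "set a \<subseteq> {1..n-1}" using red unfolding red_words_def by auto
  have si: "1 \<le> i" "i < n" using letter_bounds[OF lt, of "length u"] a by auto
  have sj: "1 \<le> j" "j < n" using letter_bounds[OF lt, of "Suc (length u)"] a by (auto simp: nth_append)
  define N where "N = length u"
  have lab: "length b = length a" using a b by simp
  define S where "S = st n a N"
  have SB: "st n b N = S" unfolding S_def st_def N_def a b by simp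
  have lS: "length S = n" "distinct S" using st_dist[OF perm red] S_def by auto
  have aN: "a!N = i" "a!(Suc N) = j" "b!N = j" "b!(Suc N) = i" unfolding a b N_def by (auto simp: nth_append)
  have NL: "Suc N < length a" unfolding a N_def by simp
  have stk: "st n b k = st n a k" if "k \<noteq> Suc N" for k
  proof (cases "k \<le> N")
    case True thus ?thesis unfolding st_def a b N_def by simp
  next
    case False
    define r where "r = k - Suc (Suc N)"
    have r: "k = Suc (Suc N) + r" using False that unfolding r_def by linarith
    have ta: "take k a = u @ [i, j] @ take r v" and tb: "take k b = u @ [j, i] @ take r v"
      unfolding a b r N_def by simp_all
    have "act (act (id_perm n) u) [j, i] = act (act (id_perm n) u) [i, j]"
      using swap_comm[of i "act (id_perm n) u" j] si sj lS ij S_def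
      unfolding st_def N_def a by (simp add: act_def)
    thus ?thesis unfolding st_def ta tb by (simp add: act_append)
  qed
  have crk: "cr n b k = cr n a k" if "k \<noteq> N" "k \<noteq> Suc N" "k < length a" for k
  proof -
    have "b!k = a!k" using that unfolding a b N_def by (auto simp: nth_append nth_Cons split: nat.splits)
    thus ?thesis using stk[OF that(2)] unfolding cr_def by simp
  qed
  have stSa: "st n a (Suc N) = swap_pos S i" using st_Suc[of N a n] NL aN S_def by simp
  have stSb: "st n b (Suc N) = swap_pos S j" using st_Suc[of N b n] NL lab aN SB by simp
  have ij': "j \<noteq> i - 1" "j \<noteq> i" "j - 1 \<noteq> i - 1" "j - 1 \<noteq> i" "i \<noteq> j - 1" using ij si sj by auto
  have cra0: "cr n a N = (S!i, S!(i-1))" unfolding cr_def S_def using aN by simp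
  have cra1: "cr n a (Suc N) = (S!j, S!(j-1))" unfolding cr_def using aN stSa lS si sj ij'
    by (simp add: nth_swap)
  have crb0: "cr n b N = (S!j, S!(j-1))" unfolding cr_def using aN SB by simp
  have crb1: "cr n b (Suc N) = (S!i, S!(i-1))" unfolding cr_def using aN stSb lS si sj ij'
    by (simp add: nth_swap)
  define \<sigma> where "\<sigma> k = (if k = N then Suc N else if k = Suc N then N else k)" for k
  have sig: "cr n b (\<sigma> k) = cr n a k" "\<sigma> k < length a" if "k < length a" for k
    using that crk cra0 cra1 crb0 crb1 NL unfolding \<sigma>_def by auto
  have Pb: "P n b p q = Suc (\<sigma> k)" if "k < length a" "cr n a k = (p, q)" for k p q
    using P_cr[OF perm redb, of "\<sigma> k" p q] sig[OF that(1)] that lab by simp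
  obtain x y z where t': "t = (x, y, z)" by (cases t) auto
  have dw: "distinct w" using perm unfolding is_perm_def by simp
  obtain k1 where k1: "k1 < length a" "cr n a k1 = (y, x)" "P n a y x = Suc k1"
    using P_vinv[OF perm red T_vinv(1)[OF dw t[unfolded t']]] by auto
  obtain k2 where k2: "k2 < length a" "cr n a k2 = (z, y)" "P n a z y = Suc k2"
    using P_vinv[OF perm red T_vinv(2)[OF dw t[unfolded t']]] by auto
  have nd: "\<not> (k1 = N \<and> k2 = Suc N)" "\<not> (k1 = Suc N \<and> k2 = N)"
  proof -
    show "\<not> (k1 = N \<and> k2 = Suc N)"
    proof
      assume "k1 = N \<and> k2 = Suc N"
      hence "S!i = S!(j-1)" using k1 k2 cra0 cra1 by simp
      thus False using lS si sj ij' by (simp add: nth_eq_iff_index_eq)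
    qed
    show "\<not> (k1 = Suc N \<and> k2 = N)"
    proof
      assume "k1 = Suc N \<and> k2 = N"
      hence "S!j = S!(i-1)" using k1 k2 cra0 cra1 by simp
      thus False using lS si sj ij' by (simp add: nth_eq_iff_index_eq)
    qed
  qed
  have "(\<sigma> k2 < \<sigma> k1) \<longleftrightarrow> (k2 < k1)" using nd unfolding \<sigma>_def by auto
  thus ?thesis unfolding t' Gamma_simp using Pb[OF k1(1,2)] Pb[OF k2(1,2)] k1(3) k2(3) by simp
qed

lemma comm_class_red:
  assumes perm: "is_perm n w" and red: "a \<in> red_words n w" and cs: "b \<in> comm_class a"
  shows "b \<in> red_words n w \<and> (\<forall>t \<in> T w. Gamma n a t = Gamma n b t)"
proof -
  have "comm_step\<^sup>*\<^sup>* a b" using cs unfolding comm_class_def by simp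
  thus ?thesis
  proof (induction rule: rtranclp_induct)
    case base thus ?case using red by simp
  next
    case (step b c)
    thus ?case using comm_red[OF perm _ step(2)] comm_Gamma[OF perm _ step(2)] by auto
  qed
qed



lemma comm_step_sym: "comm_step a b \<Longrightarrow> comm_step b a"
  unfolding comm_step_def by (metis add.commute)

lemma comm_rt_sym: "comm_step\<^sup>*\<^sup>* a b \<Longrightarrow> comm_step\<^sup>*\<^sup>* b a"
proof (induction rule: rtranclp_induct)
  case base thus ?case by simp
next
  case (step b c) thus ?case using comm_step_sym by (meson converse_rtranclp_into_rtranclp)
qed

lemma comm_step_snoc: "comm_step a b \<Longrightarrow> comm_step (a @ [s]) (b @ [s])"
  unfolding comm_step_def by (metis append.assoc)

lemma comm_rt_snoc: "comm_step\<^sup>*\<^sup>* a b \<Longrightarrow> comm_step\<^sup>*\<^sup>* (a @ [s]) (b @ [s])"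
proof (induction rule: rtranclp_induct)
  case base thus ?case by simp
next
  case (step b c) thus ?case using comm_step_snoc by (meson rtranclp.rtrancl_into_rtrancl)
qed

lemma move_to_end:
  "(\<forall>x\<in>set v. x + 2 \<le> s \<or> s + 2 \<le> x) \<Longrightarrow> comm_step\<^sup>*\<^sup>* (u @ [s] @ v) (u @ v @ [s])"
proof (induction v arbitrary: u)
  case Nil thus ?case by simp
next
  case (Cons x v)
  have "comm_step (u @ [s] @ x # v) ((u @ [x]) @ [s] @ v)"
    unfolding comm_step_def using Cons.prems
    by (intro exI[of _ u] exI[of _ v] exI[of _ s] exI[of _ x]) auto
  moreover have "comm_step\<^sup>*\<^sup>* ((u @ [x]) @ [s] @ v) ((u @ [x]) @ v @ [s])"
    using Cons.IH[of "u @ [x]"] Cons.prems by simp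
  ultimately show ?case by simp
qed

lemma removal:
  assumes perm: "is_perm n w" and red: "a' @ [s] \<in> red_words n w"
  defines "w' \<equiv> act (id_perm n) a'"
  shows "is_perm n w'" "a' \<in> red_words n w'" "w' = swap_pos w s" "w = swap_pos w' s"
    "1 \<le> s" "s < n" "w' ! (s-1) < w' ! s"
    "cr n (a' @ [s]) (length a') = (w' ! s, w' ! (s-1))"
    "T w' \<subseteq> T w" "\<forall>t\<in>T w'. Gamma n a' t = Gamma n (a' @ [s]) t"
proof -
  let ?a = "a' @ [s]"
  let ?m = "length a'"
  have lt: "set ?a \<subseteq> {1..n-1}" using red unfolding red_words_def by auto
  have stm: "st n ?a ?m = w'" unfolding st_def w'_def by simp
  show pw': "is_perm n w'" using st_perm[OF lt, of ?m] stm by simp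
  have ss: "1 \<le> s" "s < n" using lb[OF perm red, of ?m] by auto
  thus "1 \<le> s" "s < n" by auto
  have lw': "length w' = n" "distinct w'" using pw' unfolding is_perm_def by auto
  show ww: "w = swap_pos w' s" using st_Suc[of ?m ?a n] st_m[OF perm red] stm by simp
  show "w' = swap_pos w s" using swap_swap[of s w'] ss lw' ww by simp
  show asc: "w' ! (s-1) < w' ! s" using ascending[OF perm red, of ?m] stm by simp
  show "cr n ?a ?m = (w' ! s, w' ! (s-1))" unfolding cr_def using stm by simp
  have "card (vinv w') = ?m" using card_st[OF perm red, of ?m] stm by simp
  hence "inv_count w' = ?m" using card_vinv[OF lw'(2)] by simp
  thus red': "a' \<in> red_words n w'" using lt unfolding red_words_def w'_def by auto
  have dw: "distinct w" using perm unfolding is_perm_def by simp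
  have ls: "s < length w'" using ss lw' by simp
  show sub: "T w' \<subseteq> T w"
  proof clarify
    fix x y z assume t: "(x, y, z) \<in> T w'"
    hence h: "x < y" "y < z" "before w' z y" "before w' y x" using T_char[OF lw'(2)] by auto
    have bs: "before w u v" if "before w' u v" "v < u" for u v
    proof -
      have e: "before w u v \<longleftrightarrow> (if u = w'!s \<and> v = w'!(s-1) then True else if u = w'!(s-1) \<and> v = w'!s then False else before w' u v)"
        unfolding ww by (rule before_swap[OF lw'(2) ss(1) ls])
      show ?thesis
      proof (cases "u = w'!s \<and> v = w'!(s-1)")
        case True thus ?thesis using e by simp
      next
        case False
        moreover have "\<not> (u = w'!(s-1) \<and> v = w'!s)" using asc that by auto
        ultimately show ?thesis using e that by simp
      qed
    qed
    show "(x, y, z) \<in> T w" using T_char[OF dw] h bs by auto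
  qed
  show "\<forall>t\<in>T w'. Gamma n a' t = Gamma n ?a t"
  proof
    fix t assume t: "t \<in> T w'"
    obtain x y z where t': "t = (x, y, z)" by (cases t) auto
    have crs: "cr n a' j = cr n ?a j" if "j < ?m" for j
      unfolding cr_def st_def using that by (simp add: nth_append)
    obtain k1 where k1: "k1 < ?m" "cr n a' k1 = (y, x)" "P n a' y x = Suc k1"
      using P_vinv[OF pw' red' T_vinv(1)[OF lw'(2) t[unfolded t']]] by auto
    obtain k2 where k2: "k2 < ?m" "cr n a' k2 = (z, y)" "P n a' z y = Suc k2"
      using P_vinv[OF pw' red' T_vinv(2)[OF lw'(2) t[unfolded t']]] by auto
    have "P n ?a y x = Suc k1" using P_cr[OF perm red, of k1] k1 crs by simp
    moreover have "P n ?a z y = Suc k2" using P_cr[OF perm red, of k2] k2 crs by simp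
    ultimately show "Gamma n a' t = Gamma n ?a t" unfolding t' Gamma_simp using k1 k2 by simp
  qed
qed

lemma before_nth_right:
  assumes "distinct U" "j < length U"
  shows "before U v (U!j) \<longleftrightarrow> (\<exists>i<j. U!i = v)"
  using assms unfolding before_def by (auto simp: nth_eq_iff_index_eq)

lemma before_nth_left:
  assumes "distinct U" "j < length U"
  shows "before U (U!j) v \<longleftrightarrow> (\<exists>i. j < i \<and> i < length U \<and> U!i = v)"
  using assms unfolding before_def by (auto simp: nth_eq_iff_index_eq)

lemma adj_before:
  assumes "distinct U" "1 \<le> r" "r < length U" "v \<noteq> U!(r-1)" "v \<noteq> U!r"
  shows "before U v (U!(r-1)) \<longleftrightarrow> before U v (U!r)"
    "before U (U!(r-1)) v \<longleftrightarrow> before U (U!r) v"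
proof -
  have r1: "r - 1 < length U" using assms by auto
  show "before U v (U!(r-1)) \<longleftrightarrow> before U v (U!r)"
    unfolding before_nth_right[OF assms(1) r1] before_nth_right[OF assms(1) assms(3)]
    using assms by (metis Suc_pred' less_Suc_eq less_le_trans less_one not_le)
  show "before U (U!(r-1)) v \<longleftrightarrow> before U (U!r) v"
    unfolding before_nth_left[OF assms(1) r1] before_nth_left[OF assms(1) assms(3)]
    using assms by (metis Suc_pred' less_Suc_eq less_le_trans less_one not_le le_simps(3))
qed



lemma no_touch:
  assumes perm: "is_perm n w" and ra: "a \<in> red_words n w" and rb: "b \<in> red_words n w"
  and gam: "\<forall>t\<in>T w. Gamma n a t = Gamma n b t"
  and dc: "(d, c) \<in> vinv w" and Pa: "P n a d c = length a"
  and adj: "1 \<le> s" "s < n" "w!(s-1) = d" "w!s = c"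
  and k: "k < length b" "cr n b k = (d, c)"
  and l: "k < l" "l < length b" "cr n b l = (p, q)"
  shows "p \<noteq> c \<and> p \<noteq> d \<and> q \<noteq> c \<and> q \<noteq> d"
proof -
  have lw: "length w = n" "distinct w" using perm unfolding is_perm_def by auto
  have lab: "length a = length b" using ra rb unfolding red_words_def by simp
  have Pbdc: "P n b d c = Suc k" using P_cr[OF perm rb k] .
  have Pbpq: "P n b p q = Suc l" using P_cr[OF perm rb l(2,3)] .
  have pqw: "(p, q) \<in> vinv w" using vinv_w[OF perm rb] l by force
  have qp: "q < p" using cr_lt[OF perm rb l(2)] l(3) by simp
  have cd: "c < d" using dc unfolding vinv_def by simp
  have Pamax: "P n a p' q' < length a" if "(p', q') \<in> vinv w" "(p', q') \<noteq> (d, c)" for p' q'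
    using P_bound[OF perm ra that(1)] P_inj[OF perm ra that(1) dc] Pa that(2) by fastforce
  have Pale: "P n a p' q' \<le> length a" if "(p', q') \<in> vinv w" for p' q'
    using P_bound[OF perm ra that] by simp
  have bwc: "v = d \<or> before w v d" if "before w v c" for v
  proof -
    have s1: "s - 1 < length w" "s < length w" using adj lw by auto
    from that obtain i where "i < s" "w!i = v" using before_nth_right[OF lw(2) s1(2)] adj by auto
    thus ?thesis using before_nth_right[OF lw(2) s1(1)] adj
      by (metis Suc_pred' less_Suc_eq less_le_trans less_one not_le)
  qed
  have bwd: "v = c \<or> before w c v" if "before w d v" for v
  proof -
    have s1: "s - 1 < length w" "s < length w" using adj lw by auto
    from that obtain i where "s - 1 < i" "i < length w" "w!i = v" using before_nth_left[OF lw(2) s1(1)] adj by auto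
    thus ?thesis using before_nth_left[OF lw(2) s1(2)] adj
      by (metis Suc_pred' less_Suc_eq less_le_trans less_one not_le le_simps(3))
  qed
  have inT: "(x, y, z) \<in> T w" if "x < y" "y < z" "before w z y" "before w y x" for x y z
    using T_char[OF lw(2)] that by simp
  have dcb: "before w d c" using dc unfolding vinv_def by simp
  define U where "U = st n b l"
  define r where "r = b!l"
  have U: "distinct U" "length U = n" using st_dist[OF perm rb] U_def by auto
  have r: "1 \<le> r" "r < n" using lb[OF perm rb l(2)] r_def by auto
  have Ur: "U!r = p" "U!(r-1) = q" using l(3) unfolding cr_def U_def r_def by auto
  have dcU: "(d, c) \<in> vinv U" using P_st[OF perm rb dc, of l] Pbdc l U_def by simp
  have Usub: "vinv U \<subseteq> vinv w" using vinv_st_sub[OF perm rb, of l] l U_def by simp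
  have PU: "(x, y) \<in> vinv U \<longleftrightarrow> P n b x y \<le> l" if "(x, y) \<in> vinv w" for x y
    using P_st[OF perm rb that, of l] l U_def by simp
  have dcUb: "before U d c" using dcU unfolding vinv_def by simp
  have np: "p \<noteq> c"
  proof
    assume pc: "p = c"
    have "(c, q) \<in> vinv w" using pqw pc by simp
    hence bcq: "before w c q" unfolding vinv_def by simp
    have t: "(q, c, d) \<in> T w" using inT[of q c d] qp pc cd bcq dcb by simp
    have "Gamma n b (q, c, d) = 1" unfolding Gamma_simp using Pbpq pc Pbdc l by simp
    moreover have "Gamma n a (q, c, d) = 0" unfolding Gamma_simp using Pale[OF \<open>(c, q) \<in> vinv w\<close>] Pa by simp
    ultimately show False using gam t by simp
  qed
  have nqd: "q \<noteq> d"
  proof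
    assume qd: "q = d"
    have "(p, d) \<in> vinv w" using pqw qd by simp
    hence bpd: "before w p d" unfolding vinv_def by simp
    have t: "(c, d, p) \<in> T w" using inT[of c d p] qp qd cd bpd dcb by simp
    have "Gamma n b (c, d, p) = 0" unfolding Gamma_simp using Pbpq qd Pbdc l by simp
    moreover have "Gamma n a (c, d, p) = 1" unfolding Gamma_simp
      using Pamax[OF \<open>(p, d) \<in> vinv w\<close>] Pa qp qd by simp
    ultimately show False using gam t by simp
  qed
  have nqc: "q \<noteq> c"
  proof
    assume qc: "q = c"
    show False
    proof (cases "p = d")
      case True
      hence "cr n b l = cr n b k" using k l qc by simp
      hence "l = k" using cr_inj[OF perm rb] k l unfolding inj_on_def by auto
      thus False using l by simp
    next
      case pd: False
      have "before U d p" using adj_before(1)[OF U(1) r(1) _, of d] dcUb Ur qc U r cd pd by auto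
      have "before w p c" using pqw qc unfolding vinv_def by simp
      hence bpd: "before w p d" using bwc pd by auto
      show False
      proof (cases "p > d")
        case True
        have pdw: "(p, d) \<in> vinv w" using True bpd unfolding vinv_def by simp
        have "(p, d) \<notin> vinv U" using before_antisym[OF U(1) \<open>before U d p\<close>] unfolding vinv_def by simp
        hence "\<not> P n b p d \<le> l" using PU[OF pdw] by simp
        hence "Gamma n b (c, d, p) = 0" unfolding Gamma_simp using Pbdc l by simp
        moreover have "Gamma n a (c, d, p) = 1" unfolding Gamma_simp
          using Pamax[OF pdw] Pa pd by simp
        moreover have "(c, d, p) \<in> T w" using inT[of c d p] cd True bpd dcb by simp
        ultimately show False using gam by force
      next
        case False
        hence "d > p" using pd by simp
        hence "(d, p) \<in> vinv U" using \<open>before U d p\<close> unfolding vinv_def by simp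
        hence "before w d p" using Usub unfolding vinv_def by auto
        thus False using before_antisym[OF lw(2) bpd] by simp
      qed
    qed
  qed
  have npd: "p \<noteq> d"
  proof
    assume pd: "p = d"
    have "before U q c" using adj_before(2)[OF U(1) r(1) _, of c] dcUb Ur pd nqc U r cd by auto
    have "before w d q" using pqw pd unfolding vinv_def by simp
    hence bcq: "before w c q" using bwd nqc by auto
    show False
    proof (cases "q < c")
      case True
      have cqw: "(c, q) \<in> vinv w" using True bcq unfolding vinv_def by simp
      have "(c, q) \<notin> vinv U" using before_antisym[OF U(1) \<open>before U q c\<close>] unfolding vinv_def by simp
      hence "\<not> P n b c q \<le> l" using PU[OF cqw] by simp
      hence "Gamma n b (q, c, d) = 1" unfolding Gamma_simp using Pbdc l by simp
      moreover have "Gamma n a (q, c, d) = 0" unfolding Gamma_simp using Pale[OF cqw] Pa by simp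
      moreover have "(q, c, d) \<in> T w" using inT[of q c d] cd True bcq dcb by simp
      ultimately show False using gam by force
    next
      case False
      hence "q > c" using nqc by simp
      hence "(q, c) \<in> vinv U" using \<open>before U q c\<close> unfolding vinv_def by simp
      hence "before w q c" using Usub unfolding vinv_def by auto
      thus False using before_antisym[OF lw(2) bcq] by simp
    qed
  qed
  show ?thesis using np npd nqc nqd by simp
qed



lemma invariant:
  assumes perm: "is_perm n w" and ra: "a \<in> red_words n w" and rb: "b \<in> red_words n w"
  and gam: "\<forall>t\<in>T w. Gamma n a t = Gamma n b t"
  and dc: "(d, c) \<in> vinv w" and Pa: "P n a d c = length a"
  and adj: "1 \<le> s" "s < n" "w!(s-1) = d" "w!s = c"
  and k: "k < length b" "cr n b k = (d, c)"
  shows "Suc k \<le> l \<Longrightarrow> l \<le> length b \<Longrightarrow> st n b l ! (b!k - 1) = d \<and> st n b l ! (b!k) = c"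
proof (induction l)
  case 0 thus ?case by simp
next
  case (Suc l)
  have e: "1 \<le> b!k" "b!k < n" using lb[OF perm rb k(1)] by auto
  have lS: "length (st n b l) = n" using st_dist[OF perm rb] by simp
  show ?case
  proof (cases "l = k")
    case True
    have "st n b (Suc k) = swap_pos (st n b k) (b!k)" using st_Suc k by simp
    moreover have "st n b k ! (b!k) = d" "st n b k ! (b!k - 1) = c" using k unfolding cr_def by auto
    moreover have "b!k \<noteq> b!k - 1" using e by simp
    ultimately show ?thesis using True e lS by (simp add: nth_swap)
  next
    case False
    hence kl: "k < l" "Suc k \<le> l" "l < length b" using Suc.prems by auto
    have IH: "st n b l ! (b!k - 1) = d" "st n b l ! (b!k) = c" using Suc.IH kl by auto
    define r where "r = b!l"
    have r: "1 \<le> r" "r < n" using lb[OF perm rb kl(3)] r_def by auto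
    have nt: "st n b l ! r \<noteq> c \<and> st n b l ! r \<noteq> d \<and> st n b l ! (r-1) \<noteq> c \<and> st n b l ! (r-1) \<noteq> d"
      using no_touch[OF perm ra rb gam dc Pa adj k kl(1) kl(3), of "st n b l ! r" "st n b l ! (r-1)"]
      unfolding cr_def r_def by simp
    have ne: "b!k - 1 \<noteq> r - 1" "b!k - 1 \<noteq> r" "b!k \<noteq> r - 1" "b!k \<noteq> r"
      using nt IH by metis+
    have "st n b (Suc l) = swap_pos (st n b l) r" using st_Suc kl r_def by simp
    thus ?thesis using IH ne e r lS by (simp add: nth_swap)
  qed
qed

lemma commutes:
  assumes perm: "is_perm n w" and ra: "a \<in> red_words n w" and rb: "b \<in> red_words n w"
  and gam: "\<forall>t\<in>T w. Gamma n a t = Gamma n b t"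
  and dc: "(d, c) \<in> vinv w" and Pa: "P n a d c = length a"
  and adj: "1 \<le> s" "s < n" "w!(s-1) = d" "w!s = c"
  and k: "k < length b" "cr n b k = (d, c)"
  and l: "k < l" "l < length b"
  shows "b!l + 2 \<le> b!k \<or> b!k + 2 \<le> b!l"
proof -
  have IH: "st n b l ! (b!k - 1) = d" "st n b l ! (b!k) = c"
    using invariant[OF assms(1-12), of l] l by auto
  have e: "1 \<le> b!k" using lb[OF perm rb k(1)] by auto
  define r where "r = b!l"
  have r: "1 \<le> r" "r < n" using lb[OF perm rb l(2)] r_def by auto
  have nt: "st n b l ! r \<noteq> c \<and> st n b l ! r \<noteq> d \<and> st n b l ! (r-1) \<noteq> c \<and> st n b l ! (r-1) \<noteq> d"
    using no_touch[OF perm ra rb gam dc Pa adj k l, of "st n b l ! r" "st n b l ! (r-1)"]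
    unfolding cr_def r_def by simp
  have ne: "r \<noteq> b!k - 1" "r \<noteq> b!k" "r - 1 \<noteq> b!k"
    using nt IH by metis+
  thus ?thesis using e r unfolding r_def[symmetric] by linarith
qed

lemma backward:
  "\<forall>w a b. is_perm n w \<longrightarrow> a \<in> red_words n w \<longrightarrow> b \<in> red_words n w \<longrightarrow> length a = m \<longrightarrow>
     (\<forall>t\<in>T w. Gamma n a t = Gamma n b t) \<longrightarrow> comm_step\<^sup>*\<^sup>* a b"
proof (induction m)
  case 0
  show ?case
  proof (intro allI impI)
    fix w a b assume h: "is_perm n w" "a \<in> red_words n w" "b \<in> red_words n w" "length a = 0"
    hence "length b = 0" unfolding red_words_def by simp
    thus "comm_step\<^sup>*\<^sup>* a b" using h by simp
  qed
next
  case (Suc m)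
  show ?case
  proof (intro allI impI)
    fix w a b assume perm: "is_perm n w" and ra: "a \<in> red_words n w" and rb: "b \<in> red_words n w"
      and la: "length a = Suc m" and gam: "\<forall>t\<in>T w. Gamma n a t = Gamma n b t"
    define a' where "a' = butlast a"
    define s where "s = last a"
    have aa: "a = a' @ [s]" using la unfolding a'_def s_def
      by (metis append_butlast_last_id list.size(3) nat.distinct(1))
    have la': "length a' = m" using la unfolding a'_def by simp
    define w' where "w' = act (id_perm n) a'"
    have ra': "a' @ [s] \<in> red_words n w" using ra aa by simp
    note R = removal[OF perm ra', folded w'_def]
    have lw: "length w = n" "distinct w" using perm unfolding is_perm_def by auto
    have lw': "length w' = n" using R(1) unfolding is_perm_def by simp
    define d where "d = w' ! s"
    define c where "c = w' ! (s - 1)"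
    have adj: "w!(s-1) = d" "w!s = c" using R(4) R(5,6) lw' unfolding c_def d_def
      by (simp_all add: nth_swap)
    have cra: "cr n a m = (d, c)" using R(8) aa la' unfolding c_def d_def by simp
    have dc: "(d, c) \<in> vinv w" using vinv_w[OF perm ra] cra la by force
    have Pa: "P n a d c = length a" using P_cr[OF perm ra _ cra] la by simp
    have lab: "length b = length a" using ra rb unfolding red_words_def by simp
    obtain k where k: "k < length b" "cr n b k = (d, c)" using P_vinv[OF perm rb dc] by auto
    note adjs = R(5) R(6) adj
    have inv: "st n b (length b) ! (b!k - 1) = d \<and> st n b (length b) ! (b!k) = c"
      using invariant[OF perm ra rb gam dc Pa adjs k, of "length b"] k by simp
    have e: "1 \<le> b!k" "b!k < n" using lb[OF perm rb k(1)] by auto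
    have "w ! (b!k - 1) = w ! (s - 1)" using inv st_m[OF perm rb] adj by simp
    hence "b!k - 1 = s - 1" using lw e R(5,6) by (simp add: nth_eq_iff_index_eq)
    hence bk: "b!k = s" using e R(5) by simp
    define b' where "b' = take k b @ drop (Suc k) b"
    have bsplit: "b = take k b @ [s] @ drop (Suc k) b" using id_take_nth_drop[OF k(1)] bk by simp
    have "\<forall>x\<in>set (drop (Suc k) b). x + 2 \<le> s \<or> s + 2 \<le> x"
    proof
      fix x assume "x \<in> set (drop (Suc k) b)"
      then obtain i where i: "i < length (drop (Suc k) b)" "drop (Suc k) b ! i = x" by (auto simp: in_set_conv_nth)
      have "k < Suc k + i" "Suc k + i < length b" using i by auto
      from commutes[OF perm ra rb gam dc Pa adjs k this] show "x + 2 \<le> s \<or> s + 2 \<le> x"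
        using i bk by simp
    qed
    hence mv: "comm_step\<^sup>*\<^sup>* b (b' @ [s])" using move_to_end[of "drop (Suc k) b" s "take k b"] bsplit
      unfolding b'_def by simp
    have "b' @ [s] \<in> comm_class b" using mv unfolding comm_class_def by simp
    note CR = comm_class_red[OF perm rb this]
    note R2 = removal[OF perm CR[THEN conjunct1]]
    have eqw: "act (id_perm n) b' = w'" using R2(3) R(3) by simp
    have rb': "b' \<in> red_words n w'" using R2(2) eqw by simp
    have "\<forall>t\<in>T w'. Gamma n a' t = Gamma n b' t"
    proof
      fix t assume t: "t \<in> T w'"
      have tw: "t \<in> T w" using R(9) t by auto
      have "Gamma n a' t = Gamma n a t" using R(10) t aa by simp
      also have "\<dots> = Gamma n b t" using gam tw by simp
      also have "\<dots> = Gamma n (b' @ [s]) t" using CR tw by simp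
      also have "\<dots> = Gamma n b' t" using R2(10) t eqw by simp
      finally show "Gamma n a' t = Gamma n b' t" .
    qed
    hence "comm_step\<^sup>*\<^sup>* a' b'" using Suc.IH R(1) R(2) rb' la' by blast
    hence "comm_step\<^sup>*\<^sup>* a (b' @ [s])" using comm_rt_snoc aa by simp
    thus "comm_step\<^sup>*\<^sup>* a b" using comm_rt_sym[OF mv] by simp
  qed
qed


theorem mainTheorem3:
  fixes n :: nat and w a b :: "nat list"
  assumes "is_perm n w"
    and "a \<in> red_words n w"
    and "b \<in> red_words n w"
  shows "b \<in> comm_class a \<longleftrightarrow> (\<forall>t \<in> T w. Gamma n a t = Gamma n b t)"
proof
  assume "b \<in> comm_class a"
  thus "\<forall>t \<in> T w. Gamma n a t = Gamma n b t" using comm_class_red[OF assms(1,2)] by blast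
next
  assume "\<forall>t \<in> T w. Gamma n a t = Gamma n b t"
  hence "comm_step\<^sup>*\<^sup>* a b" using backward[of n "length a"] assms by blast
  thus "b \<in> comm_class a" unfolding comm_class_def by simp
qed

end
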